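(* Let $\mathfrak g$ be a Lie algebra over a field $\mathbb k$ and $X$ its associated binary SD object. The homomorphism $\Psi^2\colon H^2_{\rm Lie}(\mathfrak g;\mathfrak g)\to H^2_{\rm BSD}(X;X)$ induced by $\phi\mapsto[(a,x)\otimes(b,y)\mapsto(0,\phi(x,y))]$ is injective. If in addition $\mathfrak g$ has trivial center, $\Psi^2$ is an isomorphism $H^2_{\rm Lie}(\mathfrak g;\mathfrak g)\cong H^2_{\rm BSD}(X;X)$.
   Context: Associated binary SD object: $X=\mathbb k\oplus\mathfrak g$, $\Delta(a,x)=(a,x)\otimes(1,0)+(1,0)\otimes(0,x)$, $\varepsilon(a,x)=a$, $q((a,x)\otimes(b,y))=(ab,bx+[x,y])$; Sweedler $\Delta(w)=w^{(1)}\otimes w^{(2)}$; $\tau$ the flip. BSD cohomology: $C^1_{\rm BSD}$ = linear $f\colon X\to X$ with $\Delta f=(f\otimes\mathbb 1+\mathbb 1\otimes f)\Delta$; $C^2_{\rm BSD}$ = linear $\phi\colon X\otimes X\to X$ with $\Delta\phi=(\phi\otimes q+q\otimes\phi)(\mathbb 1\otimes\tau\otimes\mathbb 1)(\Delta\otimes\Delta)$; $\delta^1f(u\otimes v)=f(q(u\otimes v))-q(f(u)\otimes v)-q(u\otimes f(v))$; $\delta^2\phi(u\otimes v\otimes w)=q(\phi(u\otimes v)\otimes w)+\phi(q(u\otimes v)\otimes w)-\phi(q(u\otimes w^{(1)})\otimes q(v\otimes w^{(2)}))-q(\phi(u\otimes w^{(1)})\otimes q(v\otimes w^{(2)}))-q(q(u\otimes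 w^{(1)})\otimes\phi(v\otimes w^{(2)}))$; $H^2_{\rm BSD}=(C^2_{\rm BSD}\cap\ker\delta^2)/\delta^1(C^1_{\rm BSD})$. Lie cohomology: $2$-cochains are alternating bilinear $\phi\colon\mathfrak g\times\mathfrak g\to\mathfrak g$; $\delta^2\phi(x,y,z)=[\phi(x,y),z]+[\phi(y,z),x]+[\phi(z,x),y]+\phi([x,y],z)+\phi([y,z],x)+\phi([z,x],y)$; $\delta^1f(x,y)=f([x,y])-[f(x),y]-[x,f(y)]$ for linear $f\colon\mathfrak g\to\mathfrak g$; $H^2_{\rm Lie}=\ker\delta^2/\operatorname{im}\delta^1$. *)

theory Defs
  imports Complex_Main "HOL-Library.Product_Plus"
begin

section \<open>Lie algebras over a field k (vector space given by an explicit scalar action)\<close>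

definition bilinear_map ::
  "('k::field \<Rightarrow> 'a::ab_group_add \<Rightarrow> 'a) \<Rightarrow> ('k \<Rightarrow> 'b::ab_group_add \<Rightarrow> 'b) \<Rightarrow>
   ('k \<Rightarrow> 'c::ab_group_add \<Rightarrow> 'c) \<Rightarrow> ('a \<Rightarrow> 'b \<Rightarrow> 'c) \<Rightarrow> bool" where
  "bilinear_map s1 s2 s3 B \<longleftrightarrow>
     (\<forall>x. Vector_Spaces.linear s2 s3 (B x)) \<and> (\<forall>y. Vector_Spaces.linear s1 s3 (\<lambda>x. B x y))"

definition lie_algebra :: "('k::field \<Rightarrow> 'v::ab_group_add \<Rightarrow> 'v) \<Rightarrow> ('v \<Rightarrow> 'v \<Rightarrow> 'v) \<Rightarrow> bool" where
  "lie_algebra scale br \<longleftrightarrow> vector_space scale \<and> bilinear_map scale scale scale br \<and>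
     (\<forall>x. br x x = 0) \<and>
     (\<forall>x y z. br x (br y z) + br y (br z x) + br z (br x y) = 0)"

definition trivial_center :: "('v::ab_group_add \<Rightarrow> 'v \<Rightarrow> 'v) \<Rightarrow> bool" where
  "trivial_center br \<longleftrightarrow> (\<forall>z. (\<forall>x. br z x = 0) \<longrightarrow> z = 0)"

definition lie_C2 :: "('k::field \<Rightarrow> 'v::ab_group_add \<Rightarrow> 'v) \<Rightarrow> ('v \<Rightarrow> 'v \<Rightarrow> 'v) set" where
  "lie_C2 scale = {\<phi>. bilinear_map scale scale scale \<phi> \<and> (\<forall>x. \<phi> x x = 0)}"

definition lie_delta2 :: "('v::ab_group_add \<Rightarrow> 'v \<Rightarrow> 'v) \<Rightarrow> ('v \<Rightarrow> 'v \<Rightarrow> 'v) \<Rightarrow> 'v \<Rightarrow> 'v \<Rightarrow> 'v \<Rightarrow> 'v" where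
  "lie_delta2 br \<phi> x y z =
     br (\<phi> x y) z + br (\<phi> y z) x + br (\<phi> z x) y + \<phi> (br x y) z + \<phi> (br y z) x + \<phi> (br z x) y"

definition lie_delta1 :: "('v::ab_group_add \<Rightarrow> 'v \<Rightarrow> 'v) \<Rightarrow> ('v \<Rightarrow> 'v) \<Rightarrow> 'v \<Rightarrow> 'v \<Rightarrow> 'v" where
  "lie_delta1 br f x y = f (br x y) - br (f x) y - br x (f y)"

definition lie_Z2 :: "('k::field \<Rightarrow> 'v::ab_group_add \<Rightarrow> 'v) \<Rightarrow> ('v \<Rightarrow> 'v \<Rightarrow> 'v) \<Rightarrow> ('v \<Rightarrow> 'v \<Rightarrow> 'v) set" where
  "lie_Z2 scale br = {\<phi> \<in> lie_C2 scale. \<forall>x y z. lie_delta2 br \<phi> x y z = 0}"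

definition lie_B2 :: "('k::field \<Rightarrow> 'v::ab_group_add \<Rightarrow> 'v) \<Rightarrow> ('v \<Rightarrow> 'v \<Rightarrow> 'v) \<Rightarrow> ('v \<Rightarrow> 'v \<Rightarrow> 'v) set" where
  "lie_B2 scale br = lie_delta1 br ` {f. Vector_Spaces.linear scale scale f}"

section \<open>The associated binary SD object X = k \<oplus> g\<close>

type_synonym ('k, 'v) sdX = "'k \<times> 'v"

definition xscale :: "('k::field \<Rightarrow> 'v::ab_group_add \<Rightarrow> 'v) \<Rightarrow> 'k \<Rightarrow> ('k, 'v) sdX \<Rightarrow> ('k, 'v) sdX" where
  "xscale scale c w = (c * fst w, scale c (snd w))"

definition xunit :: "('k::field, 'v::ab_group_add) sdX" where
  "xunit = (1, 0)"

definition xq :: "('k::field \<Rightarrow> 'v::ab_group_add \<Rightarrow> 'v) \<Rightarrow> ('v \<Rightarrow> 'v \<Rightarrow> 'v) \<Rightarrow>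
    ('k, 'v) sdX \<Rightarrow> ('k, 'v) sdX \<Rightarrow> ('k, 'v) sdX" where
  "xq scale br u v = (fst u * fst v, scale (fst v) (snd u) + br (snd u) (snd v))"

text \<open>The coproduct \<Delta>(a,x) = (a,x) \<otimes> (1,0) + (1,0) \<otimes> (0,x), as a formal sum of simple tensors
  (the Sweedler terms w^(1) \<otimes> w^(2)).\<close>
definition xDelta :: "('k::field, 'v::ab_group_add) sdX \<Rightarrow> (('k, 'v) sdX \<times> ('k, 'v) sdX) list" where
  "xDelta w = [(w, xunit), (xunit, (0, snd w))]"

text \<open>Equality in X \<otimes> X of two finite sums of simple tensors: over a field, two elements of a
  tensor product V \<otimes> V are equal iff every bilinear form V \<times> V \<rightarrow> k (= every linear functional
  on V \<otimes> V, by the universal property) takes the same value on them.\<close>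
definition tensor_eq :: "('k::field \<Rightarrow> 'v::ab_group_add \<Rightarrow> 'v) \<Rightarrow>
    (('k, 'v) sdX \<times> ('k, 'v) sdX) list \<Rightarrow> (('k, 'v) sdX \<times> ('k, 'v) sdX) list \<Rightarrow> bool" where
  "tensor_eq scale S T \<longleftrightarrow>
     (\<forall>\<beta> :: ('k, 'v) sdX \<Rightarrow> ('k, 'v) sdX \<Rightarrow> 'k.
        bilinear_map (xscale scale) (xscale scale) (*) \<beta> \<longrightarrow>
        sum_list (map (\<lambda>(u, v). \<beta> u v) S) = sum_list (map (\<lambda>(u, v). \<beta> u v) T))"

text \<open>1-cochains: linear f : X \<rightarrow> X with \<Delta> f = (f \<otimes> 1 + 1 \<otimes> f) \<Delta>.\<close>
definition bsd_C1 :: "('k::field \<Rightarrow> 'v::ab_group_add \<Rightarrow> 'v) \<Rightarrow> (('k, 'v) sdX \<Rightarrow> ('k, 'v) sdX) set" where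
  "bsd_C1 scale = {f. Vector_Spaces.linear (xscale scale) (xscale scale) f \<and>
     (\<forall>w. tensor_eq scale (xDelta (f w))
            (map (\<lambda>(w1, w2). (f w1, w2)) (xDelta w) @ map (\<lambda>(w1, w2). (w1, f w2)) (xDelta w)))}"

text \<open>2-cochains: linear \<phi> : X \<otimes> X \<rightarrow> X, i.e. bilinear maps X \<times> X \<rightarrow> X, with
  \<Delta> \<phi> = (\<phi> \<otimes> q + q \<otimes> \<phi>)(1 \<otimes> \<tau> \<otimes> 1)(\<Delta> \<otimes> \<Delta>); by linearity it suffices (and is necessary)
  to check this on simple tensors u \<otimes> v.\<close>
definition bsd_C2 :: "('k::field \<Rightarrow> 'v::ab_group_add \<Rightarrow> 'v) \<Rightarrow> ('v \<Rightarrow> 'v \<Rightarrow> 'v) \<Rightarrow>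
    (('k, 'v) sdX \<Rightarrow> ('k, 'v) sdX \<Rightarrow> ('k, 'v) sdX) set" where
  "bsd_C2 scale br = {\<phi>. bilinear_map (xscale scale) (xscale scale) (xscale scale) \<phi> \<and>
     (\<forall>u v. tensor_eq scale (xDelta (\<phi> u v))
        (concat (map (\<lambda>(u1, u2). concat (map (\<lambda>(v1, v2).
            [(\<phi> u1 v1, xq scale br u2 v2), (xq scale br u1 v1, \<phi> u2 v2)]) (xDelta v))) (xDelta u))))}"

definition bsd_delta1 :: "('k::field \<Rightarrow> 'v::ab_group_add \<Rightarrow> 'v) \<Rightarrow> ('v \<Rightarrow> 'v \<Rightarrow> 'v) \<Rightarrow>
    (('k, 'v) sdX \<Rightarrow> ('k, 'v) sdX) \<Rightarrow> ('k, 'v) sdX \<Rightarrow> ('k, 'v) sdX \<Rightarrow> ('k, 'v) sdX" where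
  "bsd_delta1 scale br f u v = f (xq scale br u v) - xq scale br (f u) v - xq scale br u (f v)"

text \<open>\<delta>^2 \<phi> evaluated on a simple tensor u \<otimes> v \<otimes> w (it is trilinear, so vanishing on simple
  tensors is the same as vanishing on X \<otimes> X \<otimes> X).\<close>
definition bsd_delta2 :: "('k::field \<Rightarrow> 'v::ab_group_add \<Rightarrow> 'v) \<Rightarrow> ('v \<Rightarrow> 'v \<Rightarrow> 'v) \<Rightarrow>
    (('k, 'v) sdX \<Rightarrow> ('k, 'v) sdX \<Rightarrow> ('k, 'v) sdX) \<Rightarrow>
    ('k, 'v) sdX \<Rightarrow> ('k, 'v) sdX \<Rightarrow> ('k, 'v) sdX \<Rightarrow> ('k, 'v) sdX" where
  "bsd_delta2 scale br \<phi> u v w =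
     xq scale br (\<phi> u v) w + \<phi> (xq scale br u v) w
     - sum_list (map (\<lambda>(w1, w2).
          \<phi> (xq scale br u w1) (xq scale br v w2)
          + xq scale br (\<phi> u w1) (xq scale br v w2)
          + xq scale br (xq scale br u w1) (\<phi> v w2)) (xDelta w))"

definition bsd_Z2 :: "('k::field \<Rightarrow> 'v::ab_group_add \<Rightarrow> 'v) \<Rightarrow> ('v \<Rightarrow> 'v \<Rightarrow> 'v) \<Rightarrow>
    (('k, 'v) sdX \<Rightarrow> ('k, 'v) sdX \<Rightarrow> ('k, 'v) sdX) set" where
  "bsd_Z2 scale br = {\<phi> \<in> bsd_C2 scale br. \<forall>u v w. bsd_delta2 scale br \<phi> u v w = 0}"

definition bsd_B2 :: "('k::field \<Rightarrow> 'v::ab_group_add \<Rightarrow> 'v) \<Rightarrow> ('v \<Rightarrow> 'v \<Rightarrow> 'v) \<Rightarrow>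
    (('k, 'v) sdX \<Rightarrow> ('k, 'v) sdX \<Rightarrow> ('k, 'v) sdX) set" where
  "bsd_B2 scale br = bsd_delta1 scale br ` bsd_C1 scale"

definition Psi2 :: "('v \<Rightarrow> 'v \<Rightarrow> 'v) \<Rightarrow> ('k::field, 'v::ab_group_add) sdX \<Rightarrow> ('k, 'v) sdX \<Rightarrow> ('k, 'v) sdX" where
  "Psi2 \<phi> u v = (0, \<phi> (snd u) (snd v))"

end

theory Submission
  imports Defs
begin

lemma lin_props:
  assumes "Vector_Spaces.linear s1 s2 f"
  shows "f (x+y) = f x + f y" "f (s1 c x) = s2 c (f x)" "f 0 = 0" "f (-x) = - f x" "f (x - y) = f x - f y"
proof -
  have A: "\<And>x y. f (x+y) = f x + f y"
    using assms unfolding Vector_Spaces.linear_iff by auto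
  have S: "\<And>c x. f (s1 c x) = s2 c (f x)"
    using assms unfolding Vector_Spaces.linear_iff by auto
  show "f (x+y) = f x + f y" "f (s1 c x) = s2 c (f x)" by (rule A, rule S)
  have Z: "f 0 = 0" using A[of 0 0] by simp
  show "f 0 = 0" by (rule Z)
  have N: "\<And>x. f (-x) = - f x" using A Z by (metis add.right_inverse add_eq_0_iff)
  show "f (-x) = - f x" by (rule N)
  show "f (x - y) = f x - f y" using A N by (metis diff_conv_add_uminus)
qed

lemma bil_props:
  assumes "bilinear_map s1 s2 s3 B"
  shows "B (x+y) z = B x z + B y z" "B x (y+z) = B x y + B x z"
    "B (s1 c x) y = s3 c (B x y)" "B x (s2 c y) = s3 c (B x y)"
    "B 0 y = 0" "B x 0 = 0" "B (-x) y = - B x y" "B x (-y) = - B x y"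
    "B (x - y) z = B x z - B y z" "B x (y - z) = B x y - B x z"
proof -
  have L1: "Vector_Spaces.linear s2 s3 (B x)" for x using assms unfolding bilinear_map_def by auto
  have L2: "Vector_Spaces.linear s1 s3 (\<lambda>x. B x y)" for y using assms unfolding bilinear_map_def by auto
  show "B (x+y) z = B x z + B y z" "B (s1 c x) y = s3 c (B x y)" "B 0 y = 0" "B (-x) y = - B x y"
    "B (x - y) z = B x z - B y z"
    using lin_props[OF L2] by auto
  show "B x (y+z) = B x y + B x z" "B x (s2 c y) = s3 c (B x y)" "B x 0 = 0" "B x (-y) = - B x y"
    "B x (y - z) = B x y - B x z"
    using lin_props[OF L1] by auto
qed

lemma two_ne_one: "(2::'a::field) \<noteq> 1"
  by (metis add_cancel_right_right one_add_one zero_neq_one)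

lemma vs_field: "vector_space ((*) :: 'k::field \<Rightarrow> 'k \<Rightarrow> 'k)"
  unfolding vector_space_def by (auto simp: algebra_simps)

lemma vs_x: assumes "vector_space scale" shows "vector_space (xscale scale)"
proof -
  interpret V: vector_space scale by fact
  show ?thesis unfolding vector_space_def xscale_def
    by (auto simp: algebra_simps V.scale_right_distrib V.scale_left_distrib)
qed


definition sdD :: "('v::ab_group_add \<Rightarrow> 'v \<Rightarrow> 'v) \<Rightarrow> ('v \<Rightarrow> 'v \<Rightarrow> 'v) \<Rightarrow> 'v \<Rightarrow> 'v \<Rightarrow> 'v \<Rightarrow> 'v" where
  "sdD br' \<phi> x y z = br' (\<phi> x y) z + \<phi> (br' x y) z - \<phi> (br' x z) y - br' (\<phi> x z) y - \<phi> x (br' y z) - br' x (\<phi> y z)"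


context
  fixes scale :: "'k::field \<Rightarrow> 'v::ab_group_add \<Rightarrow> 'v" and br :: "'v \<Rightarrow> 'v \<Rightarrow> 'v"
  assumes L: "lie_algebra scale br"
begin

lemma VS: "vector_space scale" using L unfolding lie_algebra_def by auto

interpretation V: vector_space scale by (rule VS)

lemma BR: "bilinear_map scale scale scale br" using L unfolding lie_algebra_def by auto

lemma sc_simps[simp]: "scale c 0 = 0" "scale 0 x = 0" "scale 1 x = x"
  "scale c (x + y) = scale c x + scale c y" "scale c (-x) = - scale c x" "scale c (x - y) = scale c x - scale c y"
  by (auto simp: V.scale_right_distrib V.scale_minus_right V.scale_right_diff_distrib)

lemmas br_simps[simp] = bil_props[OF BR]

lemma br_xx[simp]: "br x x = 0" using L unfolding lie_algebra_def by auto

lemma br_anti: "br x y = - br y x"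
proof -
  have "0 = br (x+y) (x+y)" by simp
  also have "\<dots> = br x y + br y x" by (simp only: br_simps(1,2), simp)
  finally have "br x y + br y x = 0" by simp
  then show ?thesis by (simp add: eq_neg_iff_add_eq_0)
qed

lemma jacobi: "br x (br y z) + br y (br z x) + br z (br x y) = 0"
  using L unfolding lie_algebra_def by auto


lemma delta2_Psi2:
  assumes P: "bilinear_map scale scale scale \<phi>"
  shows "bsd_delta2 scale br (Psi2 \<phi>) u v w = (0, sdD br \<phi> (snd u) (snd v) (snd w))"
proof -
  obtain a x where u: "u = (a,x)" by (cases u)
  obtain b y where v: "v = (b,y)" by (cases v)
  obtain c z where w: "w = (c,z)" by (cases w)
  note PP = bil_props[OF P]
  show ?thesis unfolding u v w bsd_delta2_def Psi2_def xDelta_def xq_def xunit_def sdD_def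
    by (simp add: PP algebra_simps)
qed

lemma alt_anti:
  assumes P: "bilinear_map s s s \<phi>" and A: "\<forall>x. \<phi> x x = 0"
  shows "\<phi> x y = - \<phi> y x"
proof -
  note PP = bil_props[OF P]
  have e: "\<phi> (x+y) (x+y) = \<phi> x x + \<phi> y x + (\<phi> x y + \<phi> y y)" by (simp only: PP(1,2))
  have "\<phi> y x + \<phi> x y = 0" using e A by simp
  then have "\<phi> x y + \<phi> y x = 0" by (simp add: add.commute)
  then show ?thesis by (simp add: eq_neg_iff_add_eq_0)
qed

lemma sdD_lie:
  assumes P: "bilinear_map scale scale scale \<phi>" and A: "\<forall>x. \<phi> x x = 0"
  shows "sdD br \<phi> x y z = lie_delta2 br \<phi> x y z"
proof -
  note PP = bil_props[OF P]
  have 1: "\<phi> x z = - \<phi> z x" "\<phi> x (br y z) = - \<phi> (br y z) x" using alt_anti[OF P A] by blast+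
  have 2: "br x z = - br z x" "br x (\<phi> y z) = - br (\<phi> y z) x" using br_anti by blast+
  show ?thesis unfolding sdD_def lie_delta2_def 1 2 by (simp add: PP algebra_simps)
qed

lemma zero_pair: "(0, 0) = (0 :: 'a::zero \<times> 'b::zero)" by (simp add: zero_prod_def)

lemma xlin_iff: "Vector_Spaces.linear (xscale scale) (xscale scale) F \<longleftrightarrow>
   (\<forall>x y. F (x + y) = F x + F y) \<and> (\<forall>c x. F (xscale scale c x) = xscale scale c (F x))"
  using vs_x[OF VS] unfolding Vector_Spaces.linear_iff by auto

lemma Psi2_bil:
  assumes P: "bilinear_map scale scale scale \<phi>"
  shows "bilinear_map (xscale scale) (xscale scale) (xscale scale) (Psi2 \<phi>)"
  using bil_props[OF P] unfolding bilinear_map_def xlin_iff by (auto simp: Psi2_def xscale_def)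

lemma part1:
  assumes "\<phi> \<in> lie_Z2 scale br" shows "Psi2 \<phi> \<in> bsd_Z2 scale br"
proof -
  have P: "bilinear_map scale scale scale \<phi>" and A: "\<forall>x. \<phi> x x = 0"
    and Z: "\<forall>x y z. lie_delta2 br \<phi> x y z = 0"
    using assms unfolding lie_Z2_def lie_C2_def by auto
  note PP = bil_props[OF P]
  have C2: "Psi2 \<phi> \<in> bsd_C2 scale br"
    unfolding bsd_C2_def tensor_eq_def
  proof (intro CollectI conjI Psi2_bil[OF P] allI impI)
    fix u v :: "('k,'v) sdX" and \<beta> :: "('k,'v) sdX \<Rightarrow> ('k,'v) sdX \<Rightarrow> 'k"
    assume B: "bilinear_map (xscale scale) (xscale scale) (*) \<beta>"
    note BB = bil_props[OF B]
    have BZ: "\<beta> (0,0) y = 0" "\<beta> x (0,0) = 0" for x y using BB(5,6) by (simp_all add: zero_prod_def)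
    show "(\<Sum>(u, v)\<leftarrow>xDelta (Psi2 \<phi> u v). \<beta> u v) =
         (\<Sum>(u, v)\<leftarrow>concat (map (\<lambda>(u1, u2). concat (map (\<lambda>(v1, v2).
            [(Psi2 \<phi> u1 v1, xq scale br u2 v2), (xq scale br u1 v1, Psi2 \<phi> u2 v2)]) (xDelta v))) (xDelta u)). \<beta> u v)"
      unfolding xDelta_def Psi2_def xq_def xunit_def by (simp add: PP BZ BB)
  qed
  show ?thesis unfolding bsd_Z2_def using C2
    by (simp add: delta2_Psi2[OF P] sdD_lie[OF P A] Z zero_pair)
qed

lemma part2:
  assumes "\<phi> \<in> lie_B2 scale br" shows "Psi2 \<phi> \<in> bsd_B2 scale br"
proof -
  obtain f where f: "Vector_Spaces.linear scale scale f" and \<phi>: "\<phi> = lie_delta1 br f"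
    using assms unfolding lie_B2_def by auto
  note ff = lin_props[OF f]
  define F where "F = (\<lambda>w::('k,'v) sdX. (0::'k, f (snd w)))"
  have C1: "F \<in> bsd_C1 scale"
    unfolding bsd_C1_def tensor_eq_def
  proof (intro CollectI conjI allI impI)
    show "Vector_Spaces.linear (xscale scale) (xscale scale) F"
      unfolding xlin_iff F_def by (auto simp: xscale_def ff)
    fix w :: "('k,'v) sdX" and \<beta> :: "('k,'v) sdX \<Rightarrow> ('k,'v) sdX \<Rightarrow> 'k"
    assume B: "bilinear_map (xscale scale) (xscale scale) (*) \<beta>"
    note BB = bil_props[OF B]
    have BZ: "\<beta> (0,0) y = 0" "\<beta> x (0,0) = 0" for x y using BB(5,6) by (simp_all add: zero_prod_def)
    show "(\<Sum>(u, v)\<leftarrow>xDelta (F w). \<beta> u v) =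
       (\<Sum>(u, v)\<leftarrow>map (\<lambda>(w1, w2). (F w1, w2)) (xDelta w) @ map (\<lambda>(w1, w2). (w1, F w2)) (xDelta w). \<beta> u v)"
      unfolding xDelta_def F_def xunit_def by (simp add: ff BZ)
  qed
  have "Psi2 \<phi> = bsd_delta1 scale br F"
    unfolding \<phi> by (auto simp: fun_eq_iff Psi2_def bsd_delta1_def F_def xq_def lie_delta1_def ff)
  then show ?thesis unfolding bsd_B2_def using C1 by blast
qed

lemma C1_fst:
  assumes "F \<in> bsd_C1 scale" shows "fst (F (0, y)) = 0"
proof -
  have lin: "Vector_Spaces.linear (xscale scale) (xscale scale) F"
    and T: "tensor_eq scale (xDelta (F (0,y)))
            (map (\<lambda>(w1, w2). (F w1, w2)) (xDelta (0,y)) @ map (\<lambda>(w1, w2). (w1, F w2)) (xDelta (0,y)))"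
    using assms unfolding bsd_C1_def by auto
  define \<beta> where "\<beta> = (\<lambda>(A::('k,'v) sdX) (B::('k,'v) sdX). fst A * fst B)"
  have B: "bilinear_map (xscale scale) (xscale scale) (*) \<beta>"
    using vs_x[OF VS] vs_field unfolding bilinear_map_def Vector_Spaces.linear_iff \<beta>_def
    by (auto simp: xscale_def algebra_simps)
  have "fst (F (0, y)) = fst (F (0,y)) + fst (F (0,y))"
    using T B unfolding tensor_eq_def
    by (drule_tac x=\<beta> in spec) (simp add: \<beta>_def xDelta_def xunit_def)
  then show ?thesis by (simp only: add_cancel_right_right)
qed

lemma part3:
  assumes P1: "bilinear_map scale scale scale \<phi>" and P2: "bilinear_map scale scale scale \<phi>'"
    and H: "Psi2 \<phi> - Psi2 \<phi>' \<in> bsd_B2 scale br"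
  shows "\<phi> - \<phi>' \<in> lie_B2 scale br"
proof -
  obtain F where F: "F \<in> bsd_C1 scale" and E: "Psi2 \<phi> - Psi2 \<phi>' = bsd_delta1 scale br F"
    using H unfolding bsd_B2_def by auto
  have lin: "Vector_Spaces.linear (xscale scale) (xscale scale) F" using F unfolding bsd_C1_def by auto
  have FA: "F (x + y) = F x + F y" "F (xscale scale c x) = xscale scale c (F x)" for x y c
    using lin[unfolded xlin_iff] by blast+
  define g where "g = (\<lambda>x. snd (F (0, x)))"
  have glin: "Vector_Spaces.linear scale scale g"
    unfolding Vector_Spaces.linear_iff g_def
  proof (intro conjI VS allI)
    fix x y c
    show "snd (F (0, x + y)) = snd (F (0, x)) + snd (F (0, y))" using FA(1)[of "(0,x)" "(0,y)"] by simp
    show "snd (F (0, scale c x)) = scale c (snd (F (0, x)))" using FA(2)[of c "(0,x)"] by (simp add: xscale_def)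
  qed
  have "\<phi> - \<phi>' = lie_delta1 br g"
  proof (intro ext)
    fix x y
    have "(Psi2 \<phi> - Psi2 \<phi>') (0,x) (0,y) = bsd_delta1 scale br F (0,x) (0,y)" using E by simp
    then have "snd ((Psi2 \<phi> - Psi2 \<phi>') (0::'k,x) (0::'k,y)) = snd (bsd_delta1 scale br F (0,x) (0,y))" by (simp only:)
    then have "\<phi> x y - \<phi>' x y = snd (F (0, br x y)) - br (snd (F (0,x))) y - br x (snd (F (0,y)))"
      by (simp add: Psi2_def bsd_delta1_def xq_def C1_fst[OF F])
    then show "(\<phi> - \<phi>') x y = lie_delta1 br g x y" by (simp add: lie_delta1_def g_def)
  qed
  then show ?thesis unfolding lie_B2_def using glin by blast
qed

lemma beta0_bil: "bilinear_map (xscale scale) (xscale scale) (*) (\<lambda>(A::('k,'v) sdX) (B::('k,'v) sdX). fst A * fst B)"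
  using vs_x[OF VS] vs_field unfolding bilinear_map_def Vector_Spaces.linear_iff
  by (auto simp: xscale_def algebra_simps)

lemma beta_l_bil:
  assumes l1: "Vector_Spaces.linear scale (*) l1" and l2: "Vector_Spaces.linear scale (*) l2"
  shows "bilinear_map (xscale scale) (xscale scale) (*) (\<lambda>(A::('k,'v) sdX) (B::('k,'v) sdX). l1 (snd A) * l2 (snd B))"
  unfolding bilinear_map_def
proof (intro conjI allI)
  note L1 = lin_props[OF l1] and L2 = lin_props[OF l2]
  fix x y :: "('k,'v) sdX"
  show "Vector_Spaces.linear (xscale scale) (*) (\<lambda>B. l1 (snd x) * l2 (snd B))"
    unfolding Vector_Spaces.linear_iff
  proof (intro conjI vs_x VS vs_field allI)
    fix a b :: "('k,'v) sdX" and c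
    show "l1 (snd x) * l2 (snd (a + b)) = l1 (snd x) * l2 (snd a) + l1 (snd x) * l2 (snd b)"
      by (simp add: L2(1) distrib_left)
    show "l1 (snd x) * l2 (snd (xscale scale c a)) = c * (l1 (snd x) * l2 (snd a))"
      by (simp add: xscale_def L2(2) mult.left_commute)
  qed
  show "Vector_Spaces.linear (xscale scale) (*) (\<lambda>A. l1 (snd A) * l2 (snd y))"
    unfolding Vector_Spaces.linear_iff
  proof (intro conjI vs_x VS vs_field allI)
    fix a b :: "('k,'v) sdX" and c
    show "l1 (snd (a + b)) * l2 (snd y) = l1 (snd a) * l2 (snd y) + l1 (snd b) * l2 (snd y)"
      by (simp add: L1(1) distrib_right)
    show "l1 (snd (xscale scale c a)) * l2 (snd y) = c * (l1 (snd a) * l2 (snd y))"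
      by (simp add: xscale_def L1(2) mult.assoc)
  qed
qed

lemma central: assumes TC: "trivial_center br" and H: "\<And>x. br x z = 0" shows "z = 0"
  using TC H br_anti unfolding trivial_center_def by (metis neg_equal_0_iff_equal)

lemma part4:
  assumes TC: "trivial_center br" and Z: "\<psi> \<in> bsd_Z2 scale br"
  shows "\<exists>\<phi> \<in> lie_Z2 scale br. \<psi> - Psi2 \<phi> \<in> bsd_B2 scale br"
proof -
  have P: "bilinear_map (xscale scale) (xscale scale) (xscale scale) \<psi>"
    and T: "\<And>u v. tensor_eq scale (xDelta (\<psi> u v))
        (concat (map (\<lambda>(u1, u2). concat (map (\<lambda>(v1, v2).
            [(\<psi> u1 v1, xq scale br u2 v2), (xq scale br u1 v1, \<psi> u2 v2)]) (xDelta v))) (xDelta u)))"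
    and D: "\<And>u v w. bsd_delta2 scale br \<psi> u v w = 0"
    using Z unfolding bsd_Z2_def bsd_C2_def by auto
  note PP = bil_props[OF P]
  have PZ: "\<psi> (0,0) y = 0" "\<psi> x (0,0) = 0" for x y using PP(5,6) by (simp_all add: zero_prod_def)
  have TB: "\<And>u v. (\<Sum>(u, v)\<leftarrow>xDelta (\<psi> u v). \<beta> u v) =
         (\<Sum>(u, v)\<leftarrow>concat (map (\<lambda>(u1, u2). concat (map (\<lambda>(v1, v2).
            [(\<psi> u1 v1, xq scale br u2 v2), (xq scale br u1 v1, \<psi> u2 v2)]) (xDelta v))) (xDelta u)). \<beta> u v)"
    if "bilinear_map (xscale scale) (xscale scale) (*) \<beta>" for \<beta>
    using T that unfolding tensor_eq_def by blast
  note T0 = TB[OF beta0_bil]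
  have F1: "fst (\<psi> (0,x) (0,y)) = 0" for x y
    using T0[of "(0,x)" "(0,y)"] by (simp add: xDelta_def xunit_def xq_def PZ two_ne_one)
  have F2: "fst (\<psi> (1,0) (1,0)) = 0"
    using T0[of "(1,0)" "(1,0)"] by (simp add: xDelta_def xunit_def xq_def PZ two_ne_one)
  have F3: "fst (\<psi> (1,0) (0,y)) = 0" for y
    using T0[of "(1,0)" "(0,y)"] by (simp add: xDelta_def xunit_def xq_def PZ F1 two_ne_one)
  have F4: "fst (\<psi> (0,x) (1,0)) = 0" for x
    using T0[of "(0,x)" "(1,0)"] by (simp add: xDelta_def xunit_def xq_def PZ F1 two_ne_one)
  have S2: "snd (\<psi> (1,0) (1,0)) = 0"
  proof -
    have "br (snd (\<psi> (1,0) (1,0))) z = 0" for z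
    proof -
      have "snd (bsd_delta2 scale br \<psi> (1,0) (1,0) (0,z)) = 0" using D by simp
      then show ?thesis
        by (simp add: bsd_delta2_def xDelta_def xunit_def xq_def PZ F1 F2 F3 F4)
    qed
    then show ?thesis using TC unfolding trivial_center_def by blast
  qed
  have E11: "\<psi> (1,0) (1,0) = 0" using F2 S2 by (simp add: prod_eq_iff)
  have S3: "snd (\<psi> (1,0) (0,y)) = 0" for y
  proof (rule ccontr)
    define s where "s = snd (\<psi> (1,0) (0,y))"
    assume "snd (\<psi> (1,0) (0,y)) \<noteq> 0"
    then have s0: "s \<noteq> 0" unfolding s_def .
    then obtain x where bx: "br s x \<noteq> 0" using TC unfolding trivial_center_def by blast
    interpret V: vector_space scale by (rule VS)
    interpret VP: vector_space_pair scale "(*) :: 'k \<Rightarrow> 'k \<Rightarrow> 'k"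
      by (intro vector_space_pair.intro VS vs_field)
    have xs: "x \<noteq> s" using bx by auto
    have xsp: "x \<notin> V.span {s}"
    proof
      assume "x \<in> V.span {s}"
      then obtain k where "x = scale k s" unfolding V.span_singleton by auto
      then have "br s x = 0" by simp
      then show False using bx by simp
    qed
    have ind: "V.independent {x, s}"
      using xsp s0 by (simp add: V.independent_insert xs)
    obtain l1 where l1: "Vector_Spaces.linear scale (*) l1" and l1v: "\<forall>z\<in>{x,s}. l1 z = (if z = s then 1 else 0)"
      using VP.linear_independent_extend[OF ind, of "\<lambda>z. if z = s then 1 else 0"] by blast
    obtain l2 where l2: "Vector_Spaces.linear scale (*) l2" and l2v: "\<forall>z\<in>{x,s}. l2 z = (if z = x then 1 else 0)"
      using VP.linear_independent_extend[OF ind, of "\<lambda>z. if z = x then 1 else 0"] by blast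
    have l1s: "l1 s = 1" "l1 x = 0" using l1v xs by auto
    have l2x: "l2 x = 1" using l2v by auto
    note L1 = lin_props[OF l1] and L2 = lin_props[OF l2]
    define \<beta> where "\<beta> = (\<lambda>(A::('k,'v) sdX) (B::('k,'v) sdX). l1 (snd A) * l2 (snd B))"
    have Bb: "bilinear_map (xscale scale) (xscale scale) (*) \<beta>"
      unfolding \<beta>_def by (rule beta_l_bil[OF l1 l2])
    have "l1 x * l2 s + l1 s * l2 x = 0"
      using TB[OF Bb, of "(0,x)" "(0,y)"]
      by (simp add: \<beta>_def xDelta_def xunit_def xq_def PZ E11 L1 L2 s_def)
    then show False using l1s l2x by simp
  qed
  define n where "n = (\<lambda>x. snd (\<psi> (0,x) (1,0)))"
  define \<psi>0 where "\<psi>0 = (\<lambda>x y. snd (\<psi> (0,x) (0,y)))"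
  have E1y: "\<psi> (1,0) (0,y) = 0" for y using F3 S3 by (simp add: prod_eq_iff)
  have Ex1: "\<psi> (0,x) (1,0) = (0, n x)" for x using F4 by (simp add: prod_eq_iff n_def)
  have Exy: "\<psi> (0,x) (0,y) = (0, \<psi>0 x y)" for x y using F1 by (simp add: prod_eq_iff \<psi>0_def)
  have NF: "\<psi> u v = (0, scale (fst v) (n (snd u)) + \<psi>0 (snd u) (snd v))" for u v
  proof -
    obtain a x where u: "u = (a,x)" by (cases u)
    obtain b y where v: "v = (b,y)" by (cases v)
    have "\<psi> (xscale scale a (1,0) + (0,x)) (xscale scale b (1,0) + (0,y)) = (0, scale b (n x) + \<psi>0 x y)"
      by (simp only: PP(1,2,3,4)) (simp add: E11 E1y Ex1 Exy xscale_def)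
    then show ?thesis unfolding u v by (simp add: xscale_def)
  qed
  have nlin: "Vector_Spaces.linear scale scale n"
    unfolding Vector_Spaces.linear_iff
  proof (intro conjI VS allI)
    fix x y c
    have "\<psi> (0, x + y) (1,0) = \<psi> ((0,x) + (0,y)) (1,0)" by simp
    then show "n (x + y) = n x + n y" unfolding n_def by (simp only: PP(1)) simp
    have "\<psi> (0, scale c x) (1,0) = \<psi> (xscale scale c (0,x)) (1,0)" by (simp add: xscale_def)
    then show "n (scale c x) = scale c (n x)" unfolding n_def by (simp only: PP(3)) (simp add: xscale_def)
  qed
  have \<psi>0bil: "bilinear_map scale scale scale \<psi>0"
    unfolding bilinear_map_def
  proof (intro conjI allI)
    fix x y :: 'v
    show "Vector_Spaces.linear scale scale (\<psi>0 x)"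
      unfolding Vector_Spaces.linear_iff
    proof (intro conjI VS allI)
      fix a b c
      have "\<psi> (0, x) (0, a + b) = \<psi> (0,x) ((0,a) + (0,b))" by simp
      then show "\<psi>0 x (a + b) = \<psi>0 x a + \<psi>0 x b" unfolding \<psi>0_def by (simp only: PP(2)) simp
      have "\<psi> (0,x) (0, scale c a) = \<psi> (0,x) (xscale scale c (0,a))" by (simp add: xscale_def)
      then show "\<psi>0 x (scale c a) = scale c (\<psi>0 x a)" unfolding \<psi>0_def by (simp only: PP(4)) (simp add: xscale_def)
    qed
    show "Vector_Spaces.linear scale scale (\<lambda>x. \<psi>0 x y)"
      unfolding Vector_Spaces.linear_iff
    proof (intro conjI VS allI)
      fix a b c
      have "\<psi> (0, a + b) (0, y) = \<psi> ((0,a) + (0,b)) (0,y)" by simp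
      then show "\<psi>0 (a + b) y = \<psi>0 a y + \<psi>0 b y" unfolding \<psi>0_def by (simp only: PP(1)) simp
      have "\<psi> (0, scale c a) (0,y) = \<psi> (xscale scale c (0,a)) (0,y)" by (simp add: xscale_def)
      then show "\<psi>0 (scale c a) y = scale c (\<psi>0 a y)" unfolding \<psi>0_def by (simp only: PP(3)) (simp add: xscale_def)
    qed
  qed
  note NN = lin_props[OF nlin] and QQ = bil_props[OF \<psi>0bil]
  have NR1: "br (n x) z = n (br x z)" for x z
  proof -
    have "snd (bsd_delta2 scale br \<psi> (0,x) (1,0) (0,z)) = 0" using D by simp
    then show ?thesis
      by (simp add: bsd_delta2_def xDelta_def xunit_def xq_def NF NN QQ)
  qed
  have NR2: "n (br x y) = br (n x) y + br x (n y)" for x y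
  proof -
    have "snd (bsd_delta2 scale br \<psi> (0,x) (0,y) (1,0)) = 0" using D by simp
    then show ?thesis
      by (simp add: bsd_delta2_def xDelta_def xunit_def xq_def NF NN QQ algebra_simps)
  qed
  have n0: "n y = 0" for y
  proof (rule central[OF TC])
    fix x show "br x (n y) = 0" using NR1[of x y] NR2[of x y] by simp
  qed
  have \<psi>eq: "\<psi> = Psi2 \<psi>0" by (auto simp: fun_eq_iff NF n0 Psi2_def)
  have sD: "sdD br \<psi>0 x y z = 0" for x y z
    using D[of "(0,x)" "(0,y)" "(0,z)"] unfolding \<psi>eq delta2_Psi2[OF \<psi>0bil] by (simp add: zero_prod_def)
  have alt: "\<forall>y. \<psi>0 y y = 0"
  proof
    fix y show "\<psi>0 y y = 0"
    proof (rule central[OF TC])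
      fix x show "br x (\<psi>0 y y) = 0" using sD[of x y y] by (simp add: sdD_def QQ)
    qed
  qed
  have Zl: "\<psi>0 \<in> lie_Z2 scale br"
    unfolding lie_Z2_def lie_C2_def using \<psi>0bil alt sD sdD_lie[OF \<psi>0bil alt] by auto
  have C10: "(\<lambda>_. 0) \<in> bsd_C1 scale"
    unfolding bsd_C1_def tensor_eq_def
  proof (intro CollectI conjI allI impI)
    show "Vector_Spaces.linear (xscale scale) (xscale scale) (\<lambda>_::('k,'v) sdX. 0::('k,'v) sdX)"
      unfolding xlin_iff by (simp add: xscale_def zero_prod_def)
    fix w :: "('k,'v) sdX" and \<beta> :: "('k,'v) sdX \<Rightarrow> ('k,'v) sdX \<Rightarrow> 'k"
    assume B: "bilinear_map (xscale scale) (xscale scale) (*) \<beta>"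
    note BB = bil_props[OF B]
    have BZ: "\<beta> (0,0) y = 0" "\<beta> x (0,0) = 0" for x y using BB(5,6) by (simp_all add: zero_prod_def)
    show "(\<Sum>(u, v)\<leftarrow>xDelta 0. \<beta> u v) =
       (\<Sum>(u, v)\<leftarrow>map (\<lambda>(w1, w2). (0, w2)) (xDelta w) @ map (\<lambda>(w1, w2). (w1, 0)) (xDelta w). \<beta> u v)"
      unfolding xDelta_def xunit_def by (simp add: BB BZ)
  qed
  have "\<psi> - Psi2 \<psi>0 = bsd_delta1 scale br (\<lambda>_. 0)"
    by (auto simp: fun_eq_iff \<psi>eq bsd_delta1_def xq_def zero_prod_def)
  then have "\<psi> - Psi2 \<psi>0 \<in> bsd_B2 scale br" unfolding bsd_B2_def using C10 by blast
  then show ?thesis using Zl by blast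
qed

end

theorem mainTheorem6:
  fixes scale :: "'k::field \<Rightarrow> 'v::ab_group_add \<Rightarrow> 'v"
    and br :: "'v \<Rightarrow> 'v \<Rightarrow> 'v"
  assumes "lie_algebra scale br"
  shows "(\<forall>\<phi> \<in> lie_Z2 scale br. Psi2 \<phi> \<in> bsd_Z2 scale br)
       \<and> (\<forall>\<phi> \<in> lie_B2 scale br. Psi2 \<phi> \<in> bsd_B2 scale br)
       \<and> (\<forall>\<phi> \<in> lie_Z2 scale br. \<forall>\<phi>' \<in> lie_Z2 scale br.
            Psi2 \<phi> - Psi2 \<phi>' \<in> bsd_B2 scale br \<longrightarrow> \<phi> - \<phi>' \<in> lie_B2 scale br)
       \<and> (trivial_center br \<longrightarrow>
            (\<forall>\<psi> \<in> bsd_Z2 scale br. \<exists>\<phi> \<in> lie_Z2 scale br. \<psi> - Psi2 \<phi> \<in> bsd_B2 scale br))"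
  using part1[OF assms] part2[OF assms] part3[OF assms] part4[OF assms]
  unfolding lie_Z2_def lie_C2_def by blast

end
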